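(* Let $n\in\mathbb{N}$ and assign each vertex $x$ of $K_n$ a weight $w(x)>0$; define the weight of an edge $xy$ as $w(xy):=w(x)w(y)$ and, for a subgraph $H\subseteq K_n$, $w(H):=\sum_{e\in E(H)}w(e)$. Let $S_n:=\sum_{x\in V(K_n)}w(x)$ and $M_n:=\max_{x\in V(K_n)}w(x)$. Then for every $\ell\ge 2$, $$w(K_n)-\max\{w(H): H\subseteq K_n,\ K_\ell\not\subseteq H\}\ \ge\ \frac{S_n}{2}\left(\frac{S_n}{\ell-1}-M_n\right).$$ *)

theory Defs
  imports Complex_Main
begin

definition complete_edges :: "'a set \<Rightarrow> 'a set set" where
  "complete_edges V = {e. \<exists>x y. x \<in> V \<and> y \<in> V \<and> x \<noteq> y \<and> e = {x, y}}"

definition edge_weight :: "('a \<Rightarrow> real) \<Rightarrow> 'a set \<Rightarrow> real" where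
  "edge_weight w e = (\<Prod>x\<in>e. w x)"

definition graph_weight :: "('a \<Rightarrow> real) \<Rightarrow> 'a set set \<Rightarrow> real" where
  "graph_weight w H = (\<Sum>e\<in>H. edge_weight w e)"

definition contains_clique :: "'a set \<Rightarrow> 'a set set \<Rightarrow> nat \<Rightarrow> bool" where
  "contains_clique V H l \<longleftrightarrow>
     (\<exists>K. K \<subseteq> V \<and> finite K \<and> card K = l \<and> (\<forall>x\<in>K. \<forall>y\<in>K. x \<noteq> y \<longrightarrow> {x, y} \<in> H))"

end

theory Submission
  imports Defs
begin

definition G :: "'a set set \<Rightarrow> 'a set \<Rightarrow> ('a \<Rightarrow> real) \<Rightarrow> real" where
  "G H V w = graph_weight w (H \<inter> complete_edges V)"

lemma finite_complete_edges: "finite V \<Longrightarrow> finite (complete_edges V)"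
proof -
  assume "finite V"
  have "complete_edges V \<subseteq> Pow V" unfolding complete_edges_def by auto
  thus ?thesis using \<open>finite V\<close> by (meson finite_Pow_iff finite_subset)
qed

lemma complete_edges_insert:
  assumes "z \<notin> U"
  shows "complete_edges (insert z U) = complete_edges U \<union> (\<lambda>u. {z,u}) ` U"
proof (rule set_eqI, rule iffI)
  fix e assume "e \<in> complete_edges (insert z U)"
  then obtain x y where e: "x \<in> insert z U" "y \<in> insert z U" "x \<noteq> y" "e = {x,y}"
    unfolding complete_edges_def by blast
  show "e \<in> complete_edges U \<union> (\<lambda>u. {z,u}) ` U"
  proof (cases "x = z")
    case True thus ?thesis using e by auto
  next
    case False
    show ?thesis
    proof (cases "y = z")
      case True thus ?thesis using e False by (auto simp: insert_commute)
    next
      case False2: False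
      thus ?thesis using e False unfolding complete_edges_def by auto
    qed
  qed
next
  fix e assume "e \<in> complete_edges U \<union> (\<lambda>u. {z,u}) ` U"
  thus "e \<in> complete_edges (insert z U)" using assms unfolding complete_edges_def by blast
qed

lemma G_insert:
  assumes fin: "finite U" and z: "z \<notin> U"
  shows "G H (insert z U) w = G H U w + w z * (\<Sum>u\<in>U. if {z,u} \<in> H then w u else 0)"
proof -
  have eq: "H \<inter> complete_edges (insert z U) =
      (H \<inter> complete_edges U) \<union> (\<lambda>u. {z,u}) ` {u\<in>U. {z,u} \<in> H}"
    using complete_edges_insert[OF z] by auto
  have disj: "(H \<inter> complete_edges U) \<inter> (\<lambda>u. {z,u}) ` {u\<in>U. {z,u} \<in> H} = {}"
    using z unfolding complete_edges_def by (auto simp: doubleton_eq_iff)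
  have inj: "inj_on (\<lambda>u. {z,u}) {u\<in>U. {z,u} \<in> H}"
    using z by (auto simp: inj_on_def doubleton_eq_iff)
  have f1: "finite (H \<inter> complete_edges U)" using finite_complete_edges[OF fin] by auto
  have f2: "finite ((\<lambda>u. {z,u}) ` {u\<in>U. {z,u} \<in> H})" using fin by auto
  have "G H (insert z U) w = G H U w + (\<Sum>e\<in>(\<lambda>u. {z,u}) ` {u\<in>U. {z,u} \<in> H}. edge_weight w e)"
    unfolding G_def graph_weight_def eq using sum.union_disjoint[OF f1 f2 disj] by simp
  also have "(\<Sum>e\<in>(\<lambda>u. {z,u}) ` {u\<in>U. {z,u} \<in> H}. edge_weight w e)
      = (\<Sum>u\<in>{u\<in>U. {z,u} \<in> H}. edge_weight w {z,u})"
    using sum.reindex[OF inj] by simp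
  also have "\<dots> = (\<Sum>u\<in>{u\<in>U. {z,u} \<in> H}. w z * w u)"
  proof (rule sum.cong)
    fix u assume "u \<in> {u\<in>U. {z,u} \<in> H}"
    hence "z \<noteq> u" using z by auto
    thus "edge_weight w {z,u} = w z * w u" by (simp add: edge_weight_def)
  qed simp
  also have "\<dots> = w z * (\<Sum>u\<in>U. if {z,u} \<in> H then w u else 0)"
    by (auto simp: sum_distrib_left sum.inter_filter[OF fin] intro!: sum.cong)
  finally show ?thesis .
qed

lemma G_cong:
  assumes "\<forall>x\<in>U. w x = w' x"
  shows "G H U w = G H U w'"
  unfolding G_def graph_weight_def edge_weight_def
  apply (rule sum.cong, simp)
  apply (rule prod.cong, simp)
  using assms unfolding complete_edges_def by auto

lemma G_clique:
  assumes "finite V" "\<forall>x\<in>V. \<forall>y\<in>V. x \<noteq> y \<longrightarrow> {x,y} \<in> H"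
  shows "2 * G H V w = (\<Sum>x\<in>V. w x)^2 - (\<Sum>x\<in>V. (w x)^2)"
  using assms
proof (induction V rule: finite_induct)
  case empty
  then show ?case by (simp add: G_def graph_weight_def complete_edges_def)
next
  case (insert z U)
  have s: "(\<Sum>u\<in>U. if {z,u} \<in> H then w u else 0) = (\<Sum>u\<in>U. w u)"
    apply (rule sum.cong) using insert by auto
  have "2 * G H U w = (\<Sum>x\<in>U. w x)^2 - (\<Sum>x\<in>U. (w x)^2)"
    using insert by auto
  then show ?case using insert G_insert[OF insert(1,2), of H w] s
    by (simp add: power2_eq_square algebra_simps)
qed

lemma cs:
  fixes w :: "'a \<Rightarrow> real"
  assumes "finite V"
  shows "(\<Sum>x\<in>V. w x)^2 \<le> real (card V) * (\<Sum>x\<in>V. (w x)^2)"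
proof -
  have "0 \<le> (\<Sum>x\<in>V. \<Sum>y\<in>V. (w x - w y)^2)"
    by (intro sum_nonneg) auto
  also have "\<dots> = (\<Sum>x\<in>V. \<Sum>y\<in>V. (w x)^2 + (w y)^2 - 2 * (w x * w y))"
    by (intro sum.cong refl) (simp add: power2_eq_square algebra_simps)
  also have "\<dots> = 2 * (real (card V) * (\<Sum>x\<in>V. (w x)^2)) - 2 * (\<Sum>x\<in>V. w x)^2"
    by (simp add: sum.distrib sum_subtractf sum_distrib_left sum_distrib_right power2_eq_square
        algebra_simps)
  finally show ?thesis by simp
qed

lemma cc_mono: "contains_clique V' H k \<Longrightarrow> V' \<subseteq> V \<Longrightarrow> contains_clique V H k"
proof -
  assume a: "contains_clique V' H k" and s: "V' \<subseteq> V"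
  then obtain K where K: "K \<subseteq> V'" "finite K" "card K = k"
    "\<forall>x\<in>K. \<forall>y\<in>K. x \<noteq> y \<longrightarrow> {x, y} \<in> H" unfolding contains_clique_def by blast
  have "K \<subseteq> V" using K(1) s by (rule subset_trans)
  thus ?thesis unfolding contains_clique_def using K by blast
qed

lemma ms:
  fixes w :: "'a \<Rightarrow> real" and r :: nat
  assumes "finite V" "\<forall>x\<in>V. w x \<ge> 0" "r \<ge> 1" "\<not> contains_clique V H (Suc r)"
  shows "2 * G H V w \<le> (1 - 1 / real r) * (\<Sum>x\<in>V. w x)^2"
  using assms
proof (induction "card V" arbitrary: V w rule: less_induct)
  case less
  show ?case
  proof (cases "\<forall>x\<in>V. \<forall>y\<in>V. x \<noteq> y \<longrightarrow> {x,y} \<in> H")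
    case True
    have cardV: "card V \<le> r"
    proof (rule ccontr)
      assume "\<not> card V \<le> r"
      then obtain K where "K \<subseteq> V" "card K = Suc r"
        using obtain_subset_with_card_n[of "Suc r" V] by auto
      hence "contains_clique V H (Suc r)"
        unfolding contains_clique_def using True less(2)
        by (metis card.infinite nat.distinct(1) subsetD)
      thus False using less(5) by simp
    qed
    have val: "2 * G H V w = (\<Sum>x\<in>V. w x)^2 - (\<Sum>x\<in>V. (w x)^2)"
      using G_clique[OF less(2) True] .
    show ?thesis
    proof (cases "V = {}")
      case True thus ?thesis using val by simp
    next
      case False
      hence k: "card V \<ge> 1" using less(2) by (simp add: Suc_leI card_gt_0_iff)
      have c: "(\<Sum>x\<in>V. w x)^2 / real (card V) \<le> (\<Sum>x\<in>V. (w x)^2)"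
        using cs[OF less(2), of w] k by (simp add: divide_le_eq mult.commute)
      have "(\<Sum>x\<in>V. w x)^2 / real r \<le> (\<Sum>x\<in>V. w x)^2 / real (card V)"
        using cardV k by (intro divide_left_mono) auto
      thus ?thesis using val c by (simp add: algebra_simps)
    qed
  next
    case False
    then obtain x y where xy: "x \<in> V" "y \<in> V" "x \<noteq> y" "{x,y} \<notin> H" by auto
    define U where "U = V - {x,y}"
    define A where "A = (\<lambda>a. \<Sum>u\<in>U. if {a,u} \<in> H then w u else 0)"
    obtain a b where ab: "a \<in> V" "b \<in> V" "a \<noteq> b" "{a,b} \<notin> H" "A b \<le> A a" "U = V - {a,b}"
    proof (cases "A y \<le> A x")
      case True thus ?thesis using that[of x y] xy U_def by auto
    next
      case False thus ?thesis using that[of y x] xy U_def by (auto simp: insert_commute)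
    qed
    have finU: "finite U" using less(2) U_def by auto
    have aU: "a \<notin> U" "b \<notin> U" using ab by auto
    have Vab: "V = insert a (insert b U)" using ab by auto
    define w' where "w' = w(a := w a + w b)"
    define V' where "V' = insert a U"
    have A': "(\<Sum>u\<in>U. if {a,u} \<in> H then w' u else 0) = A a"
      unfolding A_def w'_def using aU by (intro sum.cong) auto
    have GU: "G H U w' = G H U w" using aU by (intro G_cong) (auto simp: w'_def)
    have GV: "G H V w = G H U w + w b * A b + w a * A a"
    proof -
      have "G H V w = G H (insert b U) w + w a * (\<Sum>u\<in>insert b U. if {a,u} \<in> H then w u else 0)"
        unfolding Vab using G_insert[of "insert b U" a H w] finU aU ab by auto
      also have "(\<Sum>u\<in>insert b U. if {a,u} \<in> H then w u else 0) = A a"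
        using finU aU ab by (simp add: A_def)
      also have "G H (insert b U) w = G H U w + w b * A b"
        using G_insert[OF finU aU(2)] by (simp add: A_def)
      finally show ?thesis by simp
    qed
    have GV': "G H V' w' = G H U w + (w a + w b) * A a"
      unfolding V'_def using G_insert[OF finU aU(1), of H w'] GU A' by (simp add: w'_def)
    have le: "G H V w \<le> G H V' w'"
    proof -
      have "w b \<ge> 0" using less(3) ab(2) by auto
      hence "A b * w b \<le> A a * w b" using ab(5) by (rule mult_right_mono[rotated])
      thus ?thesis using GV GV' by (simp add: algebra_simps)
    qed
    have S: "(\<Sum>x\<in>V'. w' x) = (\<Sum>x\<in>V. w x)"
    proof -
      have "(\<Sum>x\<in>V'. w' x) = w a + w b + (\<Sum>x\<in>U. w' x)"
        unfolding V'_def using finU aU by (simp add: w'_def)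
      also have "(\<Sum>x\<in>U. w' x) = (\<Sum>x\<in>U. w x)"
        using aU by (intro sum.cong) (auto simp: w'_def)
      finally show ?thesis unfolding Vab using finU aU ab by simp
    qed
    have cardlt: "card V' < card V"
      unfolding V'_def Vab using finU aU ab by simp
    have IH: "2 * G H V' w' \<le> (1 - 1 / real r) * (\<Sum>x\<in>V'. w' x)^2"
    proof (rule less(1)[OF cardlt])
      show "finite V'" using finU V'_def by simp
      show "\<forall>x\<in>V'. 0 \<le> w' x" using less(3) ab unfolding V'_def w'_def Vab by auto
      show "1 \<le> r" by fact
      show "\<not> contains_clique V' H (Suc r)"
      proof
        assume "contains_clique V' H (Suc r)"
        moreover have "V' \<subseteq> V" unfolding V'_def Vab by auto
        ultimately have "contains_clique V H (Suc r)" by (rule cc_mono)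
        thus False using less(5) by simp
      qed
    qed
    show ?thesis using IH le S by simp
  qed
qed

lemma fin_ineq:
  fixes S M Q g m :: real assumes "2*g = S^2 - Q" "2*m \<le> (1 - 1/real r)*S^2" "Q \<le> S*M"
  shows "S/2*(S/real r - M) \<le> g - m"
proof -
  have e0: "S/2*(S/real r - M) = (S^2/real r)/2 - S*M/2"
    by (simp add: power2_eq_square right_diff_distrib)
  have e1: "(1 - 1/real r) * S^2 = S^2 - S^2/real r" by (simp add: algebra_simps)
  have "2*m \<le> S^2 - S^2/real r" using assms(2) e1 by simp
  moreover obtain A B C where "A = S^2" "B = S^2/real r" "C = S*M" by auto
  ultimately show ?thesis using assms(1,3) e0 by simp
qed

theorem mainTheorem8:
  fixes n l :: nat and w :: "nat \<Rightarrow> real"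
  assumes pos: "\<forall>x\<in>{..<n}. w x > 0"
    and l: "l \<ge> 2"
  shows "graph_weight w (complete_edges {..<n})
           - Max {graph_weight w H | H. H \<subseteq> complete_edges {..<n}
                                       \<and> \<not> contains_clique {..<n} H l}
         \<ge> (\<Sum>x<n. w x) / 2 * ((\<Sum>x<n. w x) / (real l - 1) - Max (w ` {..<n}))"
proof -
  define V where "V = {..<n::nat}"
  define r where "r = l - 1"
  define S where "S = (\<Sum>x<n. w x)"
  define Q where "Q = (\<Sum>x\<in>V. (w x)^2)"
  define T where "T = {graph_weight w H | H. H \<subseteq> complete_edges {..<n}
                                       \<and> \<not> contains_clique {..<n} H l}"
  have r1: "r \<ge> 1" and lr: "l = Suc r" and rl: "real l - 1 = real r" using l by (auto simp: r_def)
  have nonneg: "\<forall>x\<in>V. w x \<ge> 0" using pos by (simp add: V_def less_imp_le)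
  have KV: "graph_weight w (complete_edges V) = G UNIV V w" by (simp add: G_def)
  have Kval: "2 * graph_weight w (complete_edges V) = S^2 - Q"
    unfolding KV S_def Q_def using G_clique[of V UNIV w] V_def by (simp add: lessThan_def)
  have finT: "finite T"
  proof -
    have "T \<subseteq> graph_weight w ` Pow (complete_edges {..<n})" unfolding T_def by auto
    moreover have "finite (graph_weight w ` Pow (complete_edges {..<n}))"
      by (simp add: finite_complete_edges)
    ultimately show ?thesis by (rule finite_subset)
  qed
  have neT: "T \<noteq> {}"
  proof -
    have "\<not> contains_clique {..<n} {} l"
    proof
      assume "contains_clique {..<n} {} l"
      then obtain K where K: "finite K" "card K = l" "\<forall>x\<in>K. \<forall>y\<in>K. x \<noteq> y \<longrightarrow> {x, y} \<in> ({}::nat set set)"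
        unfolding contains_clique_def by blast
      have "card K \<ge> 2" using K l by simp
      then have "K \<noteq> {}" by auto
      then obtain x where x: "x \<in> K" by auto
      have "card (K - {x}) \<ge> 1" using \<open>card K \<ge> 2\<close> x K(1) by simp
      then have "K - {x} \<noteq> {}" by (cases "K - {x} = {}") simp_all
      then obtain y where "y \<in> K" "y \<noteq> x" by auto
      then obtain x y where "x \<in> K" "y \<in> K" "x \<noteq> y" using x by blast
      thus False using K by auto
    qed
    thus ?thesis unfolding T_def by blast
  qed
  have bound: "\<forall>t\<in>T. 2 * t \<le> (1 - 1 / real r) * S^2"
  proof
    fix t assume "t \<in> T"
    then obtain H where H: "t = graph_weight w H" "H \<subseteq> complete_edges {..<n}"
      "\<not> contains_clique {..<n} H l" unfolding T_def by blast
    have "t = G H V w" using H by (simp add: G_def V_def Int_absorb2)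
    thus "2 * t \<le> (1 - 1 / real r) * S^2"
      using ms[of V w r H] nonneg r1 H lr by (simp add: V_def S_def)
  qed
  have MaxT: "2 * Max T \<le> (1 - 1 / real r) * S^2"
    using bound Max_in[OF finT neT] by blast
  have QM: "Q \<le> S * Max (w ` {..<n})"
  proof (cases "n = 0")
    case True thus ?thesis by (simp add: Q_def S_def V_def)
  next
    case False
    have "Q \<le> (\<Sum>x\<in>V. Max (w ` {..<n}) * w x)"
      unfolding Q_def
    proof (rule sum_mono)
      fix x assume x: "x \<in> V"
      have "w x \<le> Max (w ` {..<n})" using x V_def by auto
      thus "(w x)^2 \<le> Max (w ` {..<n}) * w x"
        using nonneg x by (simp add: power2_eq_square mult_right_mono)
    qed
    also have "(\<Sum>x\<in>V. Max (w ` {..<n}) * w x) = Max (w ` {..<n}) * S"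
      by (simp add: S_def V_def sum_distrib_left)
    finally show ?thesis by (simp add: mult.commute)
  qed
  have "S / 2 * (S / real r - Max (w ` {..<n})) \<le> graph_weight w (complete_edges V) - Max T"
    by (rule fin_ineq[OF Kval MaxT QM])
  then show ?thesis unfolding T_def V_def S_def rl .
qed

end
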